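(* Let $\mathcal X$ be a finite alphabet, $\widehat q$ a probability vector on $\mathcal X$, and $p$ a probability measure on the nonnegative integers with mean one. Define $q(c)=p(n)\prod_{i=1}^n\widehat q(a_i)$ for $c=(n,a_1,\dots,a_n)\in\mathcal X^*$. Then for every $\phi:\mathcal X\to[0,\infty)$, with $z=\sum_{b\in\mathcal X}\phi(b)$, $$\inf\Big\{H(\widetilde\nu\,\|\,q):\widetilde\nu\in\mathcal M(\mathcal X^* ),\ \phi(b)=\sum_{c\in\mathcal X^*}m(b,c)\widetilde\nu(c)\text{ for all }b\in\mathcal X\Big\}=z\,H(\phi/z\,\|\,\widehat q)+I_p(z),$$ where $I_p(x)=\sup_{\lambda\in\mathbb R}\{\lambda x-\log\sum_{n=0}^\infty p(n)e^{\lambda n}\}$ (and the term $zH(\phi/z\,\|\,\widehat q)$ is interpreted as $0$ when $z=0$).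
   Context: $\mathcal X^*=\bigcup_{n\ge0}\{n\}\times\mathcal X^n$ with elements $c=(n,a_1,\dots,a_n)$; $m(b,c)=\sum_{i=1}^n\mathbf 1\{a_i=b\}$. $\mathcal M(\mathcal X^* )$ is the set of probability measures on $\mathcal X^*$; $H$ is relative entropy. *)

theory Defs
  imports "HOL-Analysis.Analysis"
begin

text \<open>Words c = (n, a_1, ..., a_n) in X^* are represented as lists (n = length c).\<close>

definition mult :: "'a \<Rightarrow> 'a list \<Rightarrow> nat" where
  "mult b c = count_list c b"

text \<open>Relative entropy H(nu || mu) of (countably supported) probability vectors, with values in
  [0, infinity]: 0 log 0 = 0, and it is infinite if nu is not absolutely continuous w.r.t. mu or
  the series does not converge (absolutely).\<close>
definition relent :: "('b \<Rightarrow> real) \<Rightarrow> ('b \<Rightarrow> real) \<Rightarrow> ereal" where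
  "relent \<nu> \<mu> =
     (if (\<forall>x. \<nu> x > 0 \<longrightarrow> \<mu> x > 0) \<and> (\<lambda>x. \<nu> x * ln (\<nu> x / \<mu> x)) summable_on UNIV
      then ereal (\<Sum>\<^sub>\<infinity>x. \<nu> x * ln (\<nu> x / \<mu> x)) else \<infinity>)"

definition is_prob :: "('b \<Rightarrow> real) \<Rightarrow> bool" where
  "is_prob \<nu> \<longleftrightarrow> (\<forall>x. \<nu> x \<ge> 0) \<and> (\<nu> has_sum 1) UNIV"

definition qword :: "(nat \<Rightarrow> real) \<Rightarrow> ('a \<Rightarrow> real) \<Rightarrow> 'a list \<Rightarrow> real" where
  "qword p qh c = p (length c) * prod_list (map qh c)"

definition Ip :: "(nat \<Rightarrow> real) \<Rightarrow> real \<Rightarrow> ereal" where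
  "Ip p x = (SUP t::real. (if summable (\<lambda>n. p n * exp (t * real n))
                           then ereal (t * x - ln (\<Sum>n. p n * exp (t * real n)))
                           else -\<infinity>))"

end

theory Submission
  imports Defs
begin


lemma finite_len_eq: "finite {c::'a::finite list. length c = n}"
  using finite_lists_length_eq[of "UNIV::'a set" n] by simp

lemma finite_len_le: "finite {c::'a::finite list. length c \<le> n}"
  using finite_lists_length_le[of "UNIV::'a set" n] by simp

lemma sum_len_Suc:
  "(\<Sum>c\<in>{c::'a::finite list. length c = Suc n}. f c) = (\<Sum>x\<in>UNIV. \<Sum>xs\<in>{c. length c = n}. f (x#xs))"
proof -
  have eq: "{c::'a list. length c = Suc n} = (\<lambda>(x,xs). x#xs) ` (UNIV \<times> {c. length c = n})"
    by (auto simp: length_Suc_conv image_iff)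
  have inj: "inj_on (\<lambda>(x,xs). x#xs) (UNIV \<times> {c::'a list. length c = n})"
    by (auto simp: inj_on_def)
  show ?thesis unfolding eq sum.reindex[OF inj] by (simp add: sum.cartesian_product split_def)
qed

lemma sum_prod_len:
  "(\<Sum>c\<in>{c::'a::finite list. length c = n}. prod_list (map w c)) = (\<Sum>b\<in>UNIV. (w b::real)) ^ n"
proof (induction n)
  case 0
  then show ?case by simp
next
  case (Suc n)
  show ?case unfolding sum_len_Suc
    by (simp add: sum_distrib_left[symmetric] sum_distrib_right[symmetric] Suc)
qed

lemma sum_count_len:
  assumes "(\<Sum>b\<in>UNIV. (w b::real)) = 1"
  shows "(\<Sum>c\<in>{c::'a::finite list. length c = n}. real (count_list c b) * prod_list (map w c)) = real n * w b"
proof (induction n)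
  case 0
  then show ?case by simp
next
  case (Suc n)
  have "(\<Sum>c\<in>{c::'a::finite list. length c = Suc n}. real (count_list c b) * prod_list (map w c))
     = (\<Sum>x\<in>UNIV. \<Sum>xs\<in>{c. length c = n}. (if x = b then 1 else 0) * (w x * prod_list (map w xs))
            + w x * (real (count_list xs b) * prod_list (map w xs)))"
    unfolding sum_len_Suc by (intro sum.cong refl) (simp add: algebra_simps)
  also have "\<dots> = (\<Sum>x\<in>UNIV. (if x = b then 1 else 0) * w x * (\<Sum>xs\<in>{c. length c = n}. prod_list (map w xs))
            + w x * (\<Sum>xs\<in>{c. length c = n}. real (count_list xs b) * prod_list (map w xs)))"
    by (simp add: sum.distrib sum_distrib_left mult.assoc)
  also have "\<dots> = (\<Sum>x\<in>UNIV. (if x = b then w x else 0) + w x * (real n * w b))"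
    by (auto intro!: sum.cong simp: Suc sum_prod_len assms)
  also have "\<dots> = w b + (\<Sum>x\<in>UNIV. w x) * (real n * w b)"
    by (simp add: sum.distrib sum_distrib_right)
  also have "\<dots> = real (Suc n) * w b"
    by (simp add: assms algebra_simps)
  finally show ?case .
qed

lemma sum_list_count:
  "sum_list (map h c) = (\<Sum>b\<in>UNIV. real (count_list c b) * (h b::real))" for c :: "'a::finite list"
proof (induction c)
  case Nil
  then show ?case by simp
next
  case (Cons a c)
  have "(\<Sum>b\<in>UNIV. real (count_list (a#c) b) * h b)
       = (\<Sum>b\<in>UNIV. (if a = b then h b else 0) + real (count_list c b) * h b)"
    by (intro sum.cong refl) (simp add: algebra_simps)
  also have "\<dots> = h a + (\<Sum>b\<in>UNIV. real (count_list c b) * h b)"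
    by (simp add: sum.distrib)
  finally show ?case using Cons by simp
qed

lemma length_count: "real (length c) = (\<Sum>b\<in>UNIV. real (count_list c b))" for c :: "'a::finite list"
  using sum_list_count[of "\<lambda>_. 1" c] by (simp add: sum_list_triv)

lemma prod_list_pos':
  "(\<forall>x\<in>set c. f x > 0) \<Longrightarrow> prod_list (map f c) > (0::real)"
  by (induction c) auto

lemma ln_prod_list:
  "(\<forall>x\<in>set c. f x > 0) \<Longrightarrow> ln (prod_list (map f c)) = sum_list (map (\<lambda>x. ln (f x :: real)) c)"
proof (induction c)
  case Nil
  then show ?case by simp
next
  case (Cons a c)
  have "prod_list (map f c) > 0" using Cons.prems by (intro prod_list_pos') auto
  then show ?case using Cons by (simp add: ln_mult)
qed

lemma prod_list_div:
  "prod_list (map f c) / prod_list (map g c) = prod_list (map (\<lambda>x. f x / g x :: real) c)"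
proof (induction c)
  case (Cons a c)
  have "f a * prod_list (map f c) / (g a * prod_list (map g c)) = (f a / g a) * (prod_list (map f c) / prod_list (map g c))"
    by simp
  then show ?case using Cons by simp
qed simp

lemma has_sum_diff':
  fixes f g :: "'b \<Rightarrow> real"
  assumes "(f has_sum a) A" "(g has_sum b) A"
  shows "((\<lambda>x. f x - g x) has_sum (a - b)) A"
  using has_sum_add[OF assms(1) has_sum_uminusI[OF assms(2)]] by simp

lemma has_sum_sumI:
  fixes f :: "'i \<Rightarrow> 'b \<Rightarrow> real"
  assumes "finite I" "\<And>i. i \<in> I \<Longrightarrow> (f i has_sum s i) A"
  shows "((\<lambda>x. \<Sum>i\<in>I. f i x) has_sum (\<Sum>i\<in>I. s i)) A"
  using assms
proof (induction I rule: finite_induct)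
  case empty
  then show ?case by simp
next
  case (insert j I)
  then show ?case by (simp add: has_sum_add)
qed

lemma gibbs:
  fixes \<nu> q w :: "'b \<Rightarrow> real"
  assumes nn: "\<And>c. \<nu> c \<ge> 0" and s1: "(\<nu> has_sum 1) UNIV"
    and qpos: "\<And>c. \<nu> c > 0 \<Longrightarrow> q c > 0"
    and wpos: "\<And>c. \<nu> c > 0 \<Longrightarrow> w c > 0" and wnn: "\<And>c. w c \<ge> 0"
    and sH: "((\<lambda>c. \<nu> c * ln (\<nu> c / q c)) has_sum H) UNIV"
    and sG: "((\<lambda>c. \<nu> c * ln (w c / q c)) has_sum G) UNIV"
    and sw: "(w has_sum W) UNIV" and WZ: "W \<le> Z" and Zpos: "Z > 0"
  shows "G - ln Z \<le> H"
proof -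
  have pt: "\<nu> c * ln (w c / q c) - \<nu> c * ln (\<nu> c / q c) - ln Z * \<nu> c \<le> (1 / Z) * w c - \<nu> c" for c
  proof (cases "\<nu> c > 0")
    case True
    have q: "q c > 0" and w: "w c > 0" using qpos wpos True by auto
    have "ln (w c / q c) - ln (\<nu> c / q c) - ln Z = ln (w c / (Z * \<nu> c))"
      using q w True Zpos by (simp add: ln_div ln_mult)
    also have "\<dots> \<le> w c / (Z * \<nu> c) - 1"
      using w True Zpos by (intro ln_le_minus_one) simp
    finally have "\<nu> c * (ln (w c / q c) - ln (\<nu> c / q c) - ln Z) \<le> \<nu> c * (w c / (Z * \<nu> c) - 1)"
      using True by (intro mult_left_mono) auto
    also have "\<dots> = (1 / Z) * w c - \<nu> c" using True Zpos by (simp add: field_simps)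
    finally show ?thesis by (simp add: algebra_simps)
  next
    case False
    then have "\<nu> c = 0" using nn[of c] by simp
    then show ?thesis using wnn[of c] Zpos by simp
  qed
  have h1: "((\<lambda>c. \<nu> c * ln (w c / q c) - \<nu> c * ln (\<nu> c / q c) - ln Z * \<nu> c) has_sum (G - H - ln Z * 1)) UNIV"
    by (intro has_sum_diff' has_sum_cmult_right sG sH s1)
  have h2: "((\<lambda>c. (1 / Z) * w c - \<nu> c) has_sum ((1/Z) * W - 1)) UNIV"
    by (intro has_sum_diff' has_sum_cmult_right sw s1)
  have "G - H - ln Z * 1 \<le> (1/Z) * W - 1" using has_sum_mono[OF h1 h2 pt] .
  also have "\<dots> \<le> 0" using WZ Zpos by (simp add: field_simps)
  finally show ?thesis by simp
qed



lemma ereal_shift: "ereal (a - e) \<le> I \<Longrightarrow> ereal a \<le> I + ereal e"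
  by (cases I) auto

definition good :: "(nat \<Rightarrow> real) \<Rightarrow> real \<Rightarrow> real \<Rightarrow> (nat \<Rightarrow> real) \<Rightarrow> nat \<Rightarrow> bool" where
  "good p z V r K \<longleftrightarrow> (\<forall>n. r n \<ge> 0) \<and> (\<forall>n>K. r n = 0) \<and> (\<Sum>n\<le>K. r n) = 1 \<and>
     (\<Sum>n\<le>K. real n * r n) = z \<and> (\<forall>n. r n > 0 \<longrightarrow> p n > 0) \<and> (\<Sum>n\<le>K. r n * ln (r n / p n)) \<le> V"

locale pdist =
  fixes p :: "nat \<Rightarrow> real"
  assumes p_nonneg: "\<And>n. p n \<ge> 0" and p_sum: "p sums 1" and p_mean: "(\<lambda>n. real n * p n) sums 1"
begin

lemma Ip_ge:
  "summable (\<lambda>n. p n * exp (t * real n)) \<Longrightarrow>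
   ereal (t * x - ln (\<Sum>n. p n * exp (t * real n))) \<le> Ip p x"
  unfolding Ip_def by (rule SUP_upper2[where i=t]) auto

lemma Ip_nonneg: "0 \<le> Ip p x"
proof -
  have "summable (\<lambda>n. p n * exp (0 * real n))" using p_sum by (simp add: sums_summable)
  from Ip_ge[OF this, of x] show ?thesis using sums_unique[OF p_sum] by (simp add: zero_ereal_def)
qed

lemma Ip_le:
  assumes "\<And>t. summable (\<lambda>n. p n * exp (t * real n)) \<Longrightarrow> t * x - ln (\<Sum>n. p n * exp (t * real n)) \<le> B"
  shows "Ip p x \<le> ereal B"
  unfolding Ip_def by (rule SUP_least) (auto simp: assms)

lemma Ip_unbounded:
  assumes "\<And>B. \<exists>t. summable (\<lambda>n. p n * exp (t * real n)) \<and> B < t * x - ln (\<Sum>n. p n * exp (t * real n))"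
  shows "Ip p x = \<infinity>"
proof (rule ccontr)
  assume "Ip p x \<noteq> \<infinity>"
  then obtain S where S: "Ip p x = ereal S" using Ip_nonneg[of x] by (cases "Ip p x") auto
  obtain t where t: "summable (\<lambda>n. p n * exp (t * real n))" "S < t * x - ln (\<Sum>n. p n * exp (t * real n))"
    using assms by blast
  from Ip_ge[OF t(1), of x] t(2) S show False by simp
qed

lemma p_pos_ex: "\<exists>n. p n > 0"
proof (rule ccontr)
  assume a: "\<not> (\<exists>n. p n > 0)"
  have "p n = 0" for n using p_nonneg[of n] a by (metis not_less order_antisym)
  then have "p = (\<lambda>_. 0)" by auto
  then show False using sums_unique[OF p_sum] by simp
qed

lemma Zpos: "summable (\<lambda>n. p n * exp (t * real n)) \<Longrightarrow> 0 < (\<Sum>n. p n * exp (t * real n))"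
proof -
  assume sf: "summable (\<lambda>n. p n * exp (t * real n))"
  obtain i where "p i > 0" using p_pos_ex by blast
  then show ?thesis by (intro suminf_pos2[OF sf, where i=i]) (auto simp: p_nonneg)
qed

lemma summable_neg: "t \<le> 0 \<Longrightarrow> summable (\<lambda>n. p n * exp (t * real n))"
proof (rule summable_comparison_test'[where g=p and N=0])
  assume t: "t \<le> 0"
  show "summable p" using p_sum by (simp add: sums_summable)
  fix n
  have "exp (t * real n) \<le> 1" using t by (simp add: mult_nonpos_nonneg)
  then have "p n * exp (t * real n) \<le> p n * 1" by (intro mult_left_mono) (auto simp: p_nonneg)
  then show "norm (p n * exp (t * real n)) \<le> p n" using p_nonneg[of n] by simp
qed

lemma delta1:
  assumes "p 0 = 0"
  shows "p n = (if n = 1 then 1 else 0)"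
proof -
  have s: "(\<lambda>n. real n * p n - p n) sums (1 - 1)" by (rule sums_diff[OF p_mean p_sum])
  have nn: "0 \<le> real n * p n - p n" for n
  proof (cases n)
    case 0 then show ?thesis using assms by simp
  next
    case (Suc m) then show ?thesis using p_nonneg[of n] by (simp add: algebra_simps)
  qed
  have z: "\<forall>n. real n * p n - p n = 0"
    using suminf_eq_zero_iff[OF sums_summable[OF s] nn] sums_unique[OF s] by simp
  have pz: "n \<noteq> 1 \<Longrightarrow> p n = 0" for n
  proof (cases "n = 0")
    case False
    assume "n \<noteq> 1"
    then have "real n - 1 \<noteq> 0" using False by simp
    moreover have "(real n - 1) * p n = 0" using z[rule_format, of n] by (simp add: algebra_simps)
    ultimately show ?thesis by simp
  qed (use assms in simp)
  have "p = (\<lambda>n. if n = 1 then p n else 0)" using pz by auto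
  then have ps: "p sums p 1" using sums_single[of 1 p] by simp
  have "p 1 = 1" using sums_unique2[OF ps p_sum] by simp
  then show ?thesis using pz by auto
qed

lemma delta1_sums:
  assumes "p 0 = 0"
  shows "(\<lambda>n. p n * exp (t * real n)) sums exp t"
proof -
  have "(\<lambda>n. p n * exp (t * real n)) = (\<lambda>n. if n = 1 then exp (t * real n) else 0)"
    using delta1[OF assms] by auto
  then show ?thesis using sums_single[of 1 "\<lambda>n. exp (t * real n)"] by simp
qed

lemma Ip0_zero: "p 0 = 0 \<Longrightarrow> Ip p 0 = \<infinity>"
proof -
  assume p0: "p 0 = 0"
  show ?thesis
  proof (rule Ip_unbounded)
    fix B :: real
    let ?t = "- B - 1"
    have s: "(\<lambda>n. p n * exp (?t * real n)) sums exp ?t" by (rule delta1_sums[OF p0])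
    then have "summable (\<lambda>n. p n * exp (?t * real n)) \<and> B < ?t * 0 - ln (\<Sum>n. p n * exp (?t * real n))"
      by (auto simp: sums_summable sums_unique[symmetric])
    then show "\<exists>t. summable (\<lambda>n. p n * exp (t * real n)) \<and> B < t * 0 - ln (\<Sum>n. p n * exp (t * real n))"
      by blast
  qed
qed

lemma split_head_bound:
  assumes t: "t \<le> 0"
  shows "(\<Sum>n. p n * exp (t * real n)) \<le> p 0 + exp t"
proof -
  let ?f = "\<lambda>n. p n * exp (t * real n)"
  have sf: "summable ?f" by (rule summable_neg[OF t])
  have sp: "summable p" using p_sum by (simp add: sums_summable)
  have "(\<Sum>n. ?f (Suc n)) \<le> (\<Sum>n. p (Suc n) * exp t)"
  proof (rule suminf_le)
    show "?f (Suc n) \<le> p (Suc n) * exp t" for n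
      using t p_nonneg[of "Suc n"] by (intro mult_left_mono) (auto simp: mult_le_cancel_left2 mult_nonneg_nonpos)
    show "summable (\<lambda>n. ?f (Suc n))" using summable_Suc_iff[of ?f] sf by blast
    show "summable (\<lambda>n. p (Suc n) * exp t)" using sp by (intro summable_mult2) (simp add: summable_Suc_iff)
  qed
  also have "\<dots> = exp t * (\<Sum>n. p (Suc n))"
  proof -
    have "summable (\<lambda>n. p (Suc n))" using summable_Suc_iff[of p] sp by blast
    then show ?thesis by (simp add: suminf_mult[symmetric] mult.commute)
  qed
  also have "\<dots> = exp t * (1 - p 0)"
    using suminf_split_head[OF sp] sums_unique[OF p_sum] by simp
  also have "\<dots> \<le> exp t" using p_nonneg[of 0] by (simp add: mult_le_cancel_left1)
  finally show ?thesis using suminf_split_head[OF sf] by simp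
qed

lemma Ip0_pos:
  assumes p0: "p 0 > 0"
  shows "ereal (- ln (p 0)) \<le> Ip p 0"
proof (rule ereal_le_epsilon2)
  fix e :: real assume e: "0 < e"
  define t where "t = min 0 (ln (p 0 * (exp e - 1)))"
  have pe: "p 0 * (exp e - 1) > 0" using p0 e by simp
  have t0: "t \<le> 0" by (simp add: t_def)
  have et: "exp t \<le> p 0 * (exp e - 1)"
  proof -
    have "t \<le> ln (p 0 * (exp e - 1))" by (simp add: t_def)
    then have "exp t \<le> exp (ln (p 0 * (exp e - 1)))" by simp
    then show ?thesis using pe by simp
  qed
  have sf: "summable (\<lambda>n. p n * exp (t * real n))" by (rule summable_neg[OF t0])
  have "(\<Sum>n. p n * exp (t * real n)) \<le> p 0 * exp e"
    using split_head_bound[OF t0] et by (simp add: algebra_simps)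
  then have "ln (\<Sum>n. p n * exp (t * real n)) \<le> ln (p 0 * exp e)"
    using Zpos[OF sf] by (subst ln_le_cancel_iff) (auto simp: p0)
  also have "\<dots> = ln (p 0) + e" using p0 by (simp add: ln_mult)
  finally have "ereal (- ln (p 0) - e) \<le> ereal (t * 0 - ln (\<Sum>n. p n * exp (t * real n)))" by simp
  also have "\<dots> \<le> Ip p 0" by (rule Ip_ge[OF sf])
  finally show "ereal (- ln (p 0)) \<le> Ip p 0 + ereal e" by (rule ereal_shift)
qed


lemma CR_0:
  assumes p0: "p 0 = 0" and S: "Ip p z = ereal S" and e: "e > 0"
  shows "\<exists>r K. good p z (S + e) r K"
proof (cases "z = 1")
  case True
  have S0: "S \<ge> 0" using Ip_nonneg[of z] S by simp
  have "good p z (S + e) p 1"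
    unfolding good_def using delta1[OF p0] True S0 e by (auto simp: p_nonneg)
  then show ?thesis by blast
next
  case False
  have "Ip p z = \<infinity>"
  proof (rule Ip_unbounded)
    fix B :: real
    define t where "t = (\<bar>B\<bar> + 1) / (z - 1)"
    have s: "(\<lambda>n. p n * exp (t * real n)) sums exp t" by (rule delta1_sums[OF p0])
    have "t * z - ln (exp t) = t * (z - 1)" by (simp add: algebra_simps)
    also have "\<dots> = \<bar>B\<bar> + 1" using False by (simp add: t_def)
    finally have "summable (\<lambda>n. p n * exp (t * real n)) \<and> B < t * z - ln (\<Sum>n. p n * exp (t * real n))"
      using s by (auto simp: sums_summable sums_unique[symmetric])
    then show "\<exists>t. summable (\<lambda>n. p n * exp (t * real n)) \<and> B < t * z - ln (\<Sum>n. p n * exp (t * real n))"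
      by blast
  qed
  then show ?thesis using S by simp
qed

lemma CR_B:
  assumes z: "z > 0" and S: "Ip p z = ereal S" and e: "e > 0" and p0: "p 0 > 0"
    and sup: "\<forall>n. real n > z \<longrightarrow> p n = 0"
  shows "\<exists>r K. good p z (S + e) r K"
proof -
  define A where "A = {n. p n > 0}"
  have Asub: "A \<subseteq> {..nat \<lceil>z\<rceil>}"
  proof
    fix n assume "n \<in> A"
    then have "\<not> real n > z" using sup by (auto simp: A_def)
    then show "n \<in> {..nat \<lceil>z\<rceil>}" by (simp add: nat_le_iff) linarith
  qed
  have finA: "finite A" using Asub finite_subset by blast
  have "0 \<in> A" using p0 by (simp add: A_def)
  define M where "M = Max A"
  have MA: "M \<in> A" unfolding M_def using finA \<open>0 \<in> A\<close> by (intro Max_in) auto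
  have pM: "p M > 0" using MA by (simp add: A_def)
  have Mz: "real M \<le> z" using MA sup by (auto simp: A_def not_less[symmetric])
  have pgt: "p n = 0" if "n > M" for n
  proof -
    have "n \<notin> A" using that Max_ge[OF finA, of n] unfolding M_def by linarith
    then show ?thesis using p_nonneg[of n] by (auto simp: A_def)
  qed
  have fsums: "(\<lambda>n. p n * f n) sums (\<Sum>n\<le>M. p n * f n)" for f :: "nat \<Rightarrow> real"
    by (rule sums_finite) (auto simp: pgt)
  have sumM: "(\<Sum>n\<le>M. p n) = 1"
    using fsums[of "\<lambda>_. 1"] p_sum by (simp add: sums_unique2)
  have Zeq: "summable (\<lambda>n. p n * exp (t * real n)) \<and> (\<Sum>n. p n * exp (t * real n)) = (\<Sum>n\<le>M. p n * exp (t * real n))" for t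
    using fsums[of "\<lambda>n. exp (t * real n)"] by (auto simp: sums_summable sums_unique[symmetric])
  show ?thesis
  proof (cases "real M < z")
    case True
    have "Ip p z = \<infinity>"
    proof (rule Ip_unbounded)
      fix B :: real
      define t where "t = (\<bar>B\<bar> + 1) / (z - real M)"
      have t0: "t \<ge> 0" using True by (simp add: t_def)
      have "(\<Sum>n\<le>M. p n * exp (t * real n)) \<le> (\<Sum>n\<le>M. p n * exp (t * real M))"
        using t0 by (intro sum_mono mult_left_mono) (auto simp: p_nonneg mult_left_mono)
      also have "\<dots> = exp (t * real M)" using sumM by (simp add: sum_distrib_right[symmetric])
      finally have le: "(\<Sum>n\<le>M. p n * exp (t * real n)) \<le> exp (t * real M)" .
      have pos: "0 < (\<Sum>n\<le>M. p n * exp (t * real n))" using Zpos[of t] Zeq[of t] by simp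
      have "ln (\<Sum>n\<le>M. p n * exp (t * real n)) \<le> ln (exp (t * real M))"
        using le pos by (subst ln_le_cancel_iff) auto
      then have "ln (\<Sum>n\<le>M. p n * exp (t * real n)) \<le> t * real M" by simp
      then have "t * (z - real M) \<le> t * z - ln (\<Sum>n\<le>M. p n * exp (t * real n))" by (simp add: algebra_simps)
      moreover have "t * (z - real M) = \<bar>B\<bar> + 1" using True by (simp add: t_def)
      ultimately show "\<exists>t. summable (\<lambda>n. p n * exp (t * real n)) \<and> B < t * z - ln (\<Sum>n. p n * exp (t * real n))"
        using Zeq[of t] by (intro exI[of _ t]) auto
    qed
    then show ?thesis using S by simp
  next
    case False
    then have Mz': "real M = z" using Mz by simp
    then have M1: "M \<ge> 1" using z by (cases M) auto
    define r where "r = (\<lambda>n::nat. if n = M then (1::real) else 0)"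
    have "ln (1 / p M) \<le> S + e"
    proof -
      define t where "t = max 0 (- ln (p M * (exp e - 1)))"
      have pe: "p M * (exp e - 1) > 0" using pM e by simp
      have t0: "t \<ge> 0" by (simp add: t_def)
      have et: "exp (- t) \<le> p M * (exp e - 1)"
      proof -
        have "- t \<le> ln (p M * (exp e - 1))" by (simp add: t_def)
        then have "exp (- t) \<le> exp (ln (p M * (exp e - 1)))" by simp
        then show ?thesis using pe by simp
      qed
      have split: "(\<Sum>n\<le>M. p n * exp (t * real n)) = p M * exp (t * real M) + (\<Sum>n<M. p n * exp (t * real n))"
        by (simp add: lessThan_Suc_atMost[symmetric])
      have "(\<Sum>n<M. p n * exp (t * real n)) \<le> (\<Sum>n<M. p n * (exp (t * real M) * exp (- t)))"
      proof (intro sum_mono mult_left_mono)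
        fix n assume "n \<in> {..<M}"
        then have "real n \<le> real M - 1" by auto
        then have "t * real n \<le> t * (real M - 1)" using t0 by (intro mult_left_mono)
        then have "t * real n \<le> t * real M + - t" by (simp add: algebra_simps)
        then show "exp (t * real n) \<le> exp (t * real M) * exp (- t)" by (simp add: exp_add[symmetric])
      qed (simp add: p_nonneg)
      also have "\<dots> = (\<Sum>n<M. p n) * (exp (t * real M) * exp (- t))" by (simp add: sum_distrib_right)
      also have "\<dots> \<le> 1 * (exp (t * real M) * exp (- t))"
      proof (intro mult_right_mono)
        have "{..<M} \<subseteq> {..M}" by auto
        then show "(\<Sum>n<M. p n) \<le> 1" using sumM sum_mono2[of "{..M}" "{..<M}" p] by (auto simp: p_nonneg)
      qed simp
      finally have "(\<Sum>n\<le>M. p n * exp (t * real n)) \<le> exp (t * real M) * (p M + exp (- t))"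
        using split by (simp add: algebra_simps)
      also have "\<dots> \<le> exp (t * real M) * (p M * exp e)"
        using et by (intro mult_left_mono) (auto simp: algebra_simps)
      finally have le: "(\<Sum>n\<le>M. p n * exp (t * real n)) \<le> exp (t * real M) * (p M * exp e)" .
      have pos: "0 < (\<Sum>n\<le>M. p n * exp (t * real n))" using Zpos[of t] Zeq[of t] by simp
      have "ln (\<Sum>n\<le>M. p n * exp (t * real n)) \<le> ln (exp (t * real M) * (p M * exp e))"
        using le pos pM by (subst ln_le_cancel_iff) auto
      also have "\<dots> = t * real M + ln (p M) + e" using pM by (simp add: ln_mult)
      finally have "ereal (ln (1 / p M) - e) \<le> ereal (t * z - ln (\<Sum>n. p n * exp (t * real n)))"
        using Zeq[of t] Mz' pM by (simp add: ln_div)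
      also have "\<dots> \<le> Ip p z" using Zeq[of t] by (intro Ip_ge) auto
      finally show ?thesis using S by simp
    qed
    have rs: "(\<Sum>n\<le>M. r n * f n) = f M" for f :: "nat \<Rightarrow> real"
    proof -
      have "(\<Sum>n\<le>M. r n * f n) = (\<Sum>n\<le>M. if n = M then f n else 0)"
        by (intro sum.cong) (auto simp: r_def)
      then show ?thesis by simp
    qed
    have "(\<Sum>n\<le>M. r n) = 1" using rs[of "\<lambda>_. 1"] by simp
    moreover have "(\<Sum>n\<le>M. real n * r n) = z" using rs[of real] Mz' by (simp add: mult.commute)
    moreover have "(\<Sum>n\<le>M. r n * ln (r n / p n)) \<le> S + e"
      using rs[of "\<lambda>n. ln (r n / p n)"] \<open>ln (1 / p M) \<le> S + e\<close> by (simp add: r_def)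
    ultimately have "good p z (S + e) r M"
      unfolding good_def using pM by (auto simp: r_def)
    then show ?thesis by blast
  qed
qed


lemma good_mono: "good p z V r K \<Longrightarrow> V \<le> V' \<Longrightarrow> good p z V' r K"
  unfolding good_def by auto

lemma CR_C:
  assumes z: "z > 0" and S: "Ip p z = ereal S" and e: "e > 0" and p0: "p 0 > 0"
    and n1: "real n1 > z" and pn1: "p n1 > 0"
  shows "\<exists>r K. good p z (S + e) r K"
proof -
  define Z where "Z K t = (\<Sum>n\<le>K. p n * exp (t * real n))" for K t
  define D where "D K t = (\<Sum>n\<le>K. (real n - z) * (p n * exp (t * real n)))" for K t
  define a where "a = min 0 (ln (z * p 0))"
  define b where "b = max 0 (ln (z / ((real n1 - z) * p n1)) / (real n1 - z))"
  have Zpos': "Z K t > 0" for K t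
  proof -
    have "p 0 * exp (t * real 0) \<le> Z K t" unfolding Z_def
      by (rule member_le_sum) (auto simp: p_nonneg)
    then show ?thesis using p0 by simp
  qed
  have Zmono: "Z K t \<le> Z K' t" if "K \<le> K'" for K K' t
    unfolding Z_def using that by (intro sum_mono2) (auto simp: p_nonneg)
  have meanle: "(\<Sum>n\<le>K. real n * p n) \<le> 1" for K
    using sum_le_suminf[OF sums_summable[OF p_mean], of "{..K}"] sums_unique[OF p_mean] p_nonneg by auto
  have sumle: "(\<Sum>n\<le>K. p n) \<le> 1" for K
    using sum_le_suminf[OF sums_summable[OF p_sum], of "{..K}"] sums_unique[OF p_sum] p_nonneg by auto
  have a0: "a \<le> 0" by (simp add: a_def)
  have ea: "exp a \<le> z * p 0"
  proof -
    have "a \<le> ln (z * p 0)" by (simp add: a_def)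
    then have "exp a \<le> exp (ln (z * p 0))" by simp
    then show ?thesis using z p0 by simp
  qed
  have b0: "b \<ge> 0" by (simp add: b_def)
  have nz: "real n1 - z > 0" using n1 by simp
  have eb: "z \<le> (real n1 - z) * p n1 * exp (b * (real n1 - z))"
  proof -
    have "ln (z / ((real n1 - z) * p n1)) / (real n1 - z) \<le> b" by (simp add: b_def)
    then have "ln (z / ((real n1 - z) * p n1)) \<le> b * (real n1 - z)" using nz by (simp add: divide_le_eq)
    then have "exp (ln (z / ((real n1 - z) * p n1))) \<le> exp (b * (real n1 - z))" by simp
    then have "z / ((real n1 - z) * p n1) \<le> exp (b * (real n1 - z))" using z nz pn1 by simp
    then show ?thesis using nz pn1 by (simp add: divide_le_eq mult.commute mult.left_commute)
  qed
  have Da: "D K a \<le> 0" for K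
  proof -
    have "D K a \<le> (\<Sum>n\<le>K. real n * p n * exp a - (if n = 0 then z * p 0 else 0))"
      unfolding D_def
    proof (intro sum_mono)
      fix n assume "n \<in> {..K}"
      show "(real n - z) * (p n * exp (a * real n)) \<le> real n * p n * exp a - (if n = 0 then z * p 0 else 0)"
      proof (cases "n = 0")
        case True then show ?thesis by simp
      next
        case False
        then have "a * real n \<le> a * 1" using a0 by (intro mult_left_mono_neg) auto
        then have ex: "exp (a * real n) \<le> exp a" by simp
        have "(real n - z) * (p n * exp (a * real n)) \<le> real n * (p n * exp (a * real n))"
          using z p_nonneg[of n] by (intro mult_right_mono) auto
        also have "\<dots> \<le> real n * (p n * exp a)"
          using ex p_nonneg[of n] by (intro mult_left_mono) auto
        finally show ?thesis using False by (simp add: mult.assoc)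
      qed
    qed
    also have "\<dots> = exp a * (\<Sum>n\<le>K. real n * p n) - z * p 0"
      by (simp add: sum_subtractf sum_distrib_left algebra_simps)
    also have "\<dots> \<le> exp a * 1 - z * p 0" using meanle[of K] by (intro diff_right_mono mult_left_mono) auto
    also have "\<dots> \<le> 0" using ea by simp
    finally show ?thesis .
  qed
  have tb: "- z * (p n * exp (b * z)) \<le> (real n - z) * (p n * exp (b * real n))" for n
  proof (cases "real n > z")
    case True
    then have "0 \<le> (real n - z) * (p n * exp (b * real n))" by (simp add: p_nonneg)
    moreover have "- z * (p n * exp (b * z)) \<le> 0" using z p_nonneg[of n] by (simp add: mult_nonneg_nonneg)
    ultimately show ?thesis by linarith
  next
    case False
    have "exp (b * real n) \<le> exp (b * z)" using b0 False by (simp add: mult_left_mono)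
    then have h: "p n * exp (b * real n) \<le> p n * exp (b * z)" by (intro mult_left_mono) (auto simp: p_nonneg)
    have "- z * (p n * exp (b * z)) \<le> - z * (p n * exp (b * real n))"
      using mult_left_mono_neg[OF h, of "-z"] z by simp
    also have "\<dots> \<le> (real n - z) * (p n * exp (b * real n))"
      by (intro mult_right_mono) (auto simp: p_nonneg)
    finally show ?thesis .
  qed
  have Db: "D K b \<ge> 0" if K: "n1 \<le> K" for K
  proof -
    have "D K b = (real n1 - z) * (p n1 * exp (b * real n1)) + (\<Sum>n\<in>{..K} - {n1}. (real n - z) * (p n * exp (b * real n)))"
      unfolding D_def using K by (subst sum.remove[of _ n1]) auto
    also have "\<dots> \<ge> (real n1 - z) * (p n1 * exp (b * real n1)) + (\<Sum>n\<in>{..K} - {n1}. - z * (p n * exp (b * z)))"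
      by (intro add_left_mono sum_mono tb)
    finally have 1: "(real n1 - z) * (p n1 * exp (b * real n1)) - z * exp (b * z) * (\<Sum>n\<in>{..K} - {n1}. p n) \<le> D K b"
      by (simp add: sum_distrib_left sum_negf algebra_simps)
    have "(\<Sum>n\<in>{..K} - {n1}. p n) \<le> (\<Sum>n\<le>K. p n)" by (intro sum_mono2) (auto simp: p_nonneg)
    then have 2: "(\<Sum>n\<in>{..K} - {n1}. p n) \<le> 1" using sumle[of K] by simp
    have 3: "z * exp (b * z) \<le> (real n1 - z) * (p n1 * exp (b * real n1))"
    proof -
      have "z * exp (b * z) \<le> (real n1 - z) * p n1 * exp (b * (real n1 - z)) * exp (b * z)"
        using eb by (intro mult_right_mono) auto
      also have "\<dots> = (real n1 - z) * (p n1 * exp (b * real n1))"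
        by (simp add: exp_add[symmetric] algebra_simps)
      finally show ?thesis .
    qed
    have "z * exp (b * z) * (\<Sum>n\<in>{..K} - {n1}. p n) \<le> z * exp (b * z) * 1"
      using 2 z by (intro mult_left_mono) auto
    then show ?thesis using 1 3 by linarith
  qed
  have cont: "continuous_on {a..b} (D K)" for K
    unfolding D_def by (intro continuous_intros)
  have ab: "a \<le> b" using a0 b0 by simp
  have ex: "\<exists>t. a \<le> t \<and> t \<le> b \<and> D (j + n1) t = 0" for j
    using IVT'[of "D (j + n1)" a 0 b, OF Da Db ab cont] by auto
  define tt where "tt j = (SOME t. a \<le> t \<and> t \<le> b \<and> D (j + n1) t = 0)" for j
  have tt: "a \<le> tt j \<and> tt j \<le> b \<and> D (j + n1) (tt j) = 0" for j
    unfolding tt_def by (rule someI_ex[OF ex])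
  have goodK: "good p z (t * z - ln (Z K t)) (\<lambda>n. if n \<le> K then p n * exp (t * real n) / Z K t else 0) K"
    if D0: "D K t = 0" for K t
  proof -
    let ?r = "\<lambda>n. if n \<le> K then p n * exp (t * real n) / Z K t else 0"
    have Zp: "Z K t > 0" by (rule Zpos')
    have r_eq: "(\<Sum>n\<le>K. g n * ?r n) = (\<Sum>n\<le>K. g n * (p n * exp (t * real n))) / Z K t" for g
      by (simp add: sum_divide_distrib)
    have mean: "(\<Sum>n\<le>K. real n * (p n * exp (t * real n))) = z * Z K t"
      using D0 unfolding D_def Z_def by (simp add: sum_subtractf sum_distrib_left left_diff_distrib)
    have s1: "(\<Sum>n\<le>K. ?r n) = 1" using r_eq[of "\<lambda>_. 1"] Zp by (simp add: Z_def)
    have s2: "(\<Sum>n\<le>K. real n * ?r n) = z" using r_eq[of real] Zp mean by simp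
    have H: "(\<Sum>n\<le>K. ?r n * ln (?r n / p n)) = (\<Sum>n\<le>K. (t * real n - ln (Z K t)) * ?r n)"
    proof (intro sum.cong refl)
      fix n assume n: "n \<in> {..K}"
      show "?r n * ln (?r n / p n) = (t * real n - ln (Z K t)) * ?r n"
      proof (cases "p n = 0")
        case False
        then have pn: "p n > 0" using p_nonneg[of n] by simp
        have "?r n / p n = exp (t * real n) / Z K t" using n pn by simp
        then have "ln (?r n / p n) = t * real n - ln (Z K t)" using Zp by (simp add: ln_div)
        then show ?thesis by simp
      qed (simp)
    qed
    also have "\<dots> = t * (\<Sum>n\<le>K. real n * ?r n) - ln (Z K t) * (\<Sum>n\<le>K. ?r n)"
      by (simp add: left_diff_distrib sum_subtractf sum_distrib_left mult.assoc diff_divide_distrib)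
    also have "\<dots> = t * z - ln (Z K t)" using s1 s2 by simp
    finally have H': "(\<Sum>n\<le>K. ?r n * ln (?r n / p n)) = t * z - ln (Z K t)" .
    have pos: "?r n > 0 \<longrightarrow> p n > 0" for n
      using p_nonneg[of n] by (cases "p n = 0") auto
    show ?thesis unfolding good_def using s1 s2 H' pos Zp by (auto simp: p_nonneg)
  qed
  have "\<exists>j. tt j * z - ln (Z (j + n1) (tt j)) \<le> S + e"
  proof (rule ccontr)
    assume "\<not> ?thesis"
    then have big: "S + e < tt j * z - ln (Z (j + n1) (tt j))" for j by (simp add: not_le)
    have sc: "seq_compact {a..b}" by (rule compact_imp_seq_compact[OF compact_Icc])
    have "\<forall>j. tt j \<in> {a..b}" using tt by auto
    from seq_compactE[OF sc this] obtain l \<sigma> where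
      l: "l \<in> {a..b}" "strict_mono \<sigma>" "(tt \<circ> \<sigma>) \<longlonglongrightarrow> l" by blast
    have lim: "(\<lambda>j. tt (\<sigma> j)) \<longlonglongrightarrow> l" using l(3) by (simp add: o_def)
    have Vl: "S + e \<le> l * z - ln (Z K0 l)" for K0
    proof (rule LIMSEQ_le_const)
      have "Z K0 l \<noteq> 0" using Zpos'[of K0 l] by simp
      then show "(\<lambda>j. tt (\<sigma> j) * z - ln (Z K0 (tt (\<sigma> j)))) \<longlonglongrightarrow> l * z - ln (Z K0 l)"
        using lim unfolding Z_def by (intro tendsto_intros) auto
      show "\<exists>N. \<forall>j\<ge>N. S + e \<le> tt (\<sigma> j) * z - ln (Z K0 (tt (\<sigma> j)))"
      proof (intro exI allI impI)
        fix j assume "K0 \<le> j"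
        then have "K0 \<le> \<sigma> j + n1" using seq_suble[OF l(2), of j] by simp
        then have "Z K0 (tt (\<sigma> j)) \<le> Z (\<sigma> j + n1) (tt (\<sigma> j))" by (rule Zmono)
        then have "ln (Z K0 (tt (\<sigma> j))) \<le> ln (Z (\<sigma> j + n1) (tt (\<sigma> j)))"
          using Zpos' by (subst ln_le_cancel_iff) auto
        moreover have "S + e < tt (\<sigma> j) * z - ln (Z (\<sigma> j + n1) (tt (\<sigma> j)))" by (rule big)
        ultimately show "S + e \<le> tt (\<sigma> j) * z - ln (Z K0 (tt (\<sigma> j)))" by linarith
      qed
    qed
    define E where "E = exp (l * z - S - e)"
    have ZE: "Z K0 l \<le> E" for K0
    proof -
      have "ln (Z K0 l) \<le> l * z - S - e" using Vl[of K0] by simp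
      then have "exp (ln (Z K0 l)) \<le> E" unfolding E_def by simp
      then show ?thesis using Zpos'[of K0 l] by simp
    qed
    have ps: "sum (\<lambda>n. p n * exp (l * real n)) {..<N} \<le> E" for N
    proof -
      have "sum (\<lambda>n. p n * exp (l * real n)) {..<N} \<le> Z N l"
        unfolding Z_def by (intro sum_mono2) (auto simp: p_nonneg)
      then show ?thesis using ZE[of N] by simp
    qed
    have sm: "summable (\<lambda>n. p n * exp (l * real n))"
      by (rule summableI_nonneg_bounded[OF _ ps]) (simp add: p_nonneg)
    have "(\<Sum>n. p n * exp (l * real n)) \<le> E" by (rule suminf_le_const[OF sm ps])
    then have "ln (\<Sum>n. p n * exp (l * real n)) \<le> ln E"
      using Zpos[OF sm] by (subst ln_le_cancel_iff) (auto simp: E_def)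
    then have "S + e \<le> l * z - ln (\<Sum>n. p n * exp (l * real n))" by (simp add: E_def)
    moreover have "ereal (l * z - ln (\<Sum>n. p n * exp (l * real n))) \<le> Ip p z" by (rule Ip_ge[OF sm])
    ultimately show False using S e by simp
  qed
  then obtain j where j: "tt j * z - ln (Z (j + n1) (tt j)) \<le> S + e" by blast
  from good_mono[OF goodK[OF conjunct2[OF conjunct2[OF tt[of j]]]] j] show ?thesis by blast
qed


lemma CR:
  assumes z: "z > 0" and S: "Ip p z = ereal S" and e: "e > 0"
  shows "\<exists>r K. good p z (S + e) r K"
proof (cases "p 0 = 0")
  case True
  then show ?thesis using CR_0 S e by blast
next
  case False
  then have p0: "p 0 > 0" using p_nonneg[of 0] by simp
  show ?thesis
  proof (cases "\<exists>n1. real n1 > z \<and> p n1 > 0")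
    case True
    then show ?thesis using CR_C[OF z S e p0] by blast
  next
    case False
    have "\<forall>n. real n > z \<longrightarrow> p n = 0"
    proof (intro allI impI)
      fix n assume "real n > z"
      then have "\<not> p n > 0" using False by blast
      then show "p n = 0" using p_nonneg[of n] by simp
    qed
    then show ?thesis using CR_B[OF z S e p0] by blast
  qed
qed

end


lemma sum_len_le:
  "(\<Sum>c\<in>{c::'a::finite list. length c \<le> N}. f c) = (\<Sum>n\<le>N. \<Sum>c\<in>{c. length c = n}. (f c :: real))"
proof -
  have eq: "{c::'a list. length c \<le> N} = (\<Union>n\<in>{..N}. {c. length c = n})" by auto
  show ?thesis unfolding eq
    by (rule sum.UNION_disjoint) (auto simp: finite_len_eq)
qed

locale main = pdist p for p :: "nat \<Rightarrow> real" +
  fixes qh :: "'a::finite \<Rightarrow> real" and \<phi> :: "'a \<Rightarrow> real" and z :: real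
  assumes qh_nonneg: "\<And>b. qh b \<ge> 0" and qh_sum: "(\<Sum>b\<in>UNIV. qh b) = 1"
    and phi_nonneg: "\<And>b. \<phi> b \<ge> 0"
    and z_def: "z = (\<Sum>b\<in>UNIV. \<phi> b)"
begin

definition "pv b = \<phi> b / z"
definition "hh b = ln (pv b / qh b)"
definition "E = (\<Sum>b\<in>UNIV. \<phi> b * hh b)"

lemma z_nonneg: "z \<ge> 0" unfolding z_def by (intro sum_nonneg phi_nonneg)

lemma pi_nonneg: "pv b \<ge> 0" unfolding pv_def using phi_nonneg z_nonneg by simp

lemma pi_sum: "z > 0 \<Longrightarrow> (\<Sum>b\<in>UNIV. pv b) = 1"
  unfolding pv_def by (simp add: sum_divide_distrib[symmetric] z_def[symmetric])

lemma pi_sum_le: "(\<Sum>b\<in>UNIV. pv b) \<le> 1"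
proof (cases "z > 0")
  case True then show ?thesis using pi_sum by simp
next
  case False then have "z = 0" using z_nonneg by simp
  then show ?thesis unfolding pv_def by simp
qed

lemma z_pi: "z > 0 \<Longrightarrow> z * pv b = \<phi> b" by (simp add: pv_def)

lemma NU:
  assumes z: "z > 0" and ac: "\<And>b. \<phi> b > 0 \<Longrightarrow> qh b > 0" and g: "good p z V r K"
  defines "\<nu> \<equiv> \<lambda>c. r (length c) * prod_list (map pv c)"
  shows "is_prob \<nu>" and "\<And>b. ((\<lambda>c. real (mult b c) * \<nu> c) has_sum \<phi> b) UNIV"
    and "relent \<nu> (qword p qh) = ereal ((\<Sum>n\<le>K. r n * ln (r n / p n)) + E)"
proof -
  from g have rnn: "\<And>n. r n \<ge> 0" and r0: "\<And>n. n > K \<Longrightarrow> r n = 0" and rs: "(\<Sum>n\<le>K. r n) = 1"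
    and rm: "(\<Sum>n\<le>K. real n * r n) = z" and rp: "\<And>n. r n > 0 \<Longrightarrow> p n > 0"
    unfolding good_def by auto
  define T where "T = {c::'a list. length c \<le> K}"
  have finT: "finite T" unfolding T_def by (rule finite_len_le)
  have out: "\<nu> c = 0" if "c \<notin> T" for c using that r0 by (simp add: T_def \<nu>_def)
  have hs: "((\<lambda>c. \<nu> c * f c) has_sum (\<Sum>n\<le>K. \<Sum>c\<in>{c. length c = n}. r n * (prod_list (map pv c) * f c))) UNIV"
    for f :: "'a list \<Rightarrow> real"
  proof (rule has_sum_finite_neutralI[OF finT])
    show "(\<Sum>n\<le>K. \<Sum>c\<in>{c. length c = n}. r n * (prod_list (map pv c) * f c)) = (\<Sum>c\<in>T. \<nu> c * f c)"
      unfolding T_def sum_len_le by (intro sum.cong refl) (simp add: \<nu>_def mult.assoc)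
  qed (use out in auto)
  have nnu: "\<nu> c \<ge> 0" for c unfolding \<nu>_def using rnn pi_nonneg by (intro mult_nonneg_nonneg prod_list_nonneg) auto
  have "(\<nu> has_sum 1) UNIV"
    using hs[of "\<lambda>_. 1"] by (simp add: sum_distrib_left[symmetric] sum_prod_len pi_sum[OF z] rs)
  then show "is_prob \<nu>" unfolding is_prob_def using nnu by auto
  show "((\<lambda>c. real (mult b c) * \<nu> c) has_sum \<phi> b) UNIV" for b
  proof -
    have "(\<Sum>n\<le>K. \<Sum>c\<in>{c. length c = n}. r n * (prod_list (map pv c) * real (count_list c b)))
        = (\<Sum>n\<le>K. r n * (real n * pv b))"
      by (simp add: sum_distrib_left[symmetric] sum_count_len[OF pi_sum[OF z]] mult.commute)
    also have "\<dots> = (\<Sum>n\<le>K. real n * r n * pv b)" by (simp add: mult_ac)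
    also have "\<dots> = (\<Sum>n\<le>K. real n * r n) * pv b" by (rule sum_distrib_right[symmetric])
    also have "\<dots> = z * pv b" using rm by simp
    also have "\<dots> = \<phi> b" by (rule z_pi[OF z])
    finally show ?thesis using hs[of "\<lambda>c. real (count_list c b)"] by (simp add: mult_def mult.commute)
  qed
  have qpos: "qword p qh c > 0" and lnq: "ln (\<nu> c / qword p qh c) = ln (r (length c) / p (length c)) + (\<Sum>b\<in>UNIV. real (count_list c b) * hh b)"
    if nc: "\<nu> c > 0" for c
  proof -
    have rc: "r (length c) > 0" and pc: "prod_list (map pv c) > 0"
      using nc rnn[of "length c"] prod_list_nonneg[of "map pv c"] pi_nonneg
      unfolding \<nu>_def by (auto simp: zero_less_mult_iff)
    have pix: "pv x > 0" if "x \<in> set c" for x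
    proof -
      have "pv x \<noteq> 0"
      proof
        assume "pv x = 0"
        then have "0 \<in> set (map pv c)" using that by force
        then have "prod_list (map pv c) = 0" by (simp add: prod_list_zero_iff)
        then show False using pc by simp
      qed
      then show ?thesis using pi_nonneg[of x] by simp
    qed
    have qx: "qh x > 0" if "x \<in> set c" for x
      using pix[OF that] ac[of x] z by (simp add: pv_def zero_less_divide_iff)
    have pl: "p (length c) > 0" using rp rc by simp
    have pq: "prod_list (map qh c) > 0" using qx by (intro prod_list_pos') auto
    show "qword p qh c > 0" unfolding qword_def using pl pq by simp
    have eqq: "\<nu> c / qword p qh c = (r (length c) / p (length c)) * prod_list (map (\<lambda>x. pv x / qh x) c)"
      unfolding \<nu>_def qword_def by (simp add: prod_list_div[symmetric])
    have pp: "prod_list (map (\<lambda>x. pv x / qh x) c) > 0" using pix qx by (intro prod_list_pos') auto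
    have "ln (\<nu> c / qword p qh c) = ln (r (length c) / p (length c)) + ln (prod_list (map (\<lambda>x. pv x / qh x) c))"
      unfolding eqq using rc pl pp by (intro ln_mult_pos) auto
    also have "ln (prod_list (map (\<lambda>x. pv x / qh x) c)) = sum_list (map hh c)"
    proof -
      have "map hh c = map (\<lambda>x. ln (pv x / qh x)) c" by (simp add: hh_def)
      moreover have "ln (prod_list (map (\<lambda>x. pv x / qh x) c)) = sum_list (map (\<lambda>x. ln (pv x / qh x)) c)"
        using pix qx by (intro ln_prod_list) auto
      ultimately show ?thesis by metis
    qed
    finally show "ln (\<nu> c / qword p qh c) = ln (r (length c) / p (length c)) + (\<Sum>b\<in>UNIV. real (count_list c b) * hh b)"
      by (simp add: sum_list_count)
  qed
  have ent: "\<nu> c * ln (\<nu> c / qword p qh c) = \<nu> c * (ln (r (length c) / p (length c)) + (\<Sum>b\<in>UNIV. real (count_list c b) * hh b))" for c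
    using lnq[of c] nnu[of c] by (cases "\<nu> c > 0") auto
  have "(\<Sum>n\<le>K. \<Sum>c\<in>{c. length c = n}. r n * (prod_list (map pv c) * (ln (r (length c) / p (length c)) + (\<Sum>b\<in>UNIV. real (count_list c b) * hh b))))
     = (\<Sum>n\<le>K. r n * ln (r n / p n) * (\<Sum>c\<in>{c. length c = n}. prod_list (map pv c))
          + r n * (\<Sum>b\<in>UNIV. hh b * (\<Sum>c\<in>{c. length c = n}. real (count_list c b) * prod_list (map pv c))))"
  proof (intro sum.cong refl)
    fix n
    show "(\<Sum>c\<in>{c. length c = n}. r n * (prod_list (map pv c) * (ln (r (length c) / p (length c)) + (\<Sum>b\<in>UNIV. real (count_list c b) * hh b))))
       = r n * ln (r n / p n) * (\<Sum>c\<in>{c. length c = n}. prod_list (map pv c))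
          + r n * (\<Sum>b\<in>UNIV. hh b * (\<Sum>c\<in>{c. length c = n}. real (count_list c b) * prod_list (map pv c)))"
      by (simp add: sum_distrib_left sum_distrib_right sum.distrib algebra_simps sum.swap[of _ UNIV])
  qed
  also have "\<dots> = (\<Sum>n\<le>K. r n * ln (r n / p n) + real n * r n * (\<Sum>b\<in>UNIV. hh b * pv b))"
    by (simp add: sum_prod_len sum_count_len[OF pi_sum[OF z]] pi_sum[OF z] sum_distrib_left algebra_simps)
  also have "\<dots> = (\<Sum>n\<le>K. r n * ln (r n / p n)) + (\<Sum>n\<le>K. real n * r n) * (\<Sum>b\<in>UNIV. hh b * pv b)"
    by (simp add: sum.distrib sum_distrib_right)
  also have "\<dots> = (\<Sum>n\<le>K. r n * ln (r n / p n)) + E"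
  proof -
    have "E = z * (\<Sum>b\<in>UNIV. hh b * pv b)"
      unfolding E_def by (simp add: sum_distrib_left z_pi[OF z, symmetric] mult_ac)
    then show ?thesis using rm by simp
  qed
  finally have hsE: "((\<lambda>c. \<nu> c * ln (\<nu> c / qword p qh c)) has_sum ((\<Sum>n\<le>K. r n * ln (r n / p n)) + E)) UNIV"
    using hs[of "\<lambda>c. ln (r (length c) / p (length c)) + (\<Sum>b\<in>UNIV. real (count_list c b) * hh b)"]
    by (simp add: ent)
  show "relent \<nu> (qword p qh) = ereal ((\<Sum>n\<le>K. r n * ln (r n / p n)) + E)"
    unfolding relent_def using qpos hsE by (auto simp: has_sum_iff)
qed


lemma pv_eq: "pv = (\<lambda>b. \<phi> b / z)" by (rule ext) (simp add: pv_def)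

lemma first_term:
  assumes ac: "\<And>b. \<phi> b > 0 \<Longrightarrow> qh b > 0"
  shows "(if z = 0 then 0 else ereal z * relent pv qh) = ereal E"
proof (cases "z = 0")
  case True
  then have "\<forall>b\<in>UNIV. \<phi> b = 0" using z_def sum_nonneg_eq_0_iff[of UNIV \<phi>] phi_nonneg by simp
  then have "E = 0" unfolding E_def by simp
  then show ?thesis using True by simp
next
  case False
  then have z: "z > 0" using z_nonneg by simp
  have cond: "\<forall>b. pv b > 0 \<longrightarrow> qh b > 0" using ac z by (auto simp: pv_def zero_less_divide_iff)
  have "relent pv qh = ereal (\<Sum>b\<in>UNIV. pv b * ln (pv b / qh b))"
    unfolding relent_def using cond by (simp add: summable_on_finite infsum_finite)
  moreover have "z * (\<Sum>b\<in>UNIV. pv b * ln (pv b / qh b)) = E"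
    unfolding E_def hh_def by (simp add: sum_distrib_left z_pi[OF z, symmetric] mult_ac)
  ultimately show ?thesis using False by simp
qed

lemma LB:
  assumes prob: "is_prob \<nu>" and cons: "\<And>b. ((\<lambda>c. real (mult b c) * \<nu> c) has_sum \<phi> b) UNIV"
  shows "(if z = 0 then 0 else ereal z * relent pv qh) + Ip p z \<le> relent \<nu> (qword p qh)"
proof (cases "relent \<nu> (qword p qh) = \<infinity>")
  case True then show ?thesis by simp
next
  case False
  let ?q = "qword p qh"
  have qpos: "\<And>c. \<nu> c > 0 \<Longrightarrow> ?q c > 0"
    and summ: "(\<lambda>c. \<nu> c * ln (\<nu> c / ?q c)) summable_on UNIV"
    using False unfolding relent_def by (auto split: if_splits)
  define R where "R = (\<Sum>\<^sub>\<infinity>c. \<nu> c * ln (\<nu> c / ?q c))"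
  have relR: "relent \<nu> ?q = ereal R" using False unfolding relent_def R_def by (auto split: if_splits)
  have sH: "((\<lambda>c. \<nu> c * ln (\<nu> c / ?q c)) has_sum R) UNIV" using summ unfolding R_def by (rule has_sum_infsum)
  have nn: "\<And>c. \<nu> c \<ge> 0" and s1: "(\<nu> has_sum 1) UNIV" using prob unfolding is_prob_def by auto
  have supp: "\<phi> x > 0" if nc: "\<nu> c > 0" and x: "x \<in> set c" for c x
  proof -
    have "count_list c x \<noteq> 0" using x by (simp add: count_list_0_iff)
    then have "real (mult x c) * \<nu> c > 0" using nc by (simp add: mult_def)
    also have "real (mult x c) * \<nu> c = (\<Sum>c'\<in>{c}. real (mult x c') * \<nu> c')" by simp
    also have "\<dots> \<le> \<phi> x" by (rule finite_sum_le_has_sum[OF cons]) (auto intro: mult_nonneg_nonneg nn)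
    finally show ?thesis .
  qed
  have qparts: "p (length c) > 0 \<and> prod_list (map qh c) > 0" if "\<nu> c > 0" for c
  proof -
    have "p (length c) * prod_list (map qh c) > 0" using qpos[OF that] by (simp add: qword_def)
    moreover have "prod_list (map qh c) \<ge> 0" using qh_nonneg by (intro prod_list_nonneg) auto
    ultimately show ?thesis using p_nonneg[of "length c"] by (simp add: zero_less_mult_iff)
  qed
  have ac: "qh b > 0" if "\<phi> b > 0" for b
  proof -
    have "\<exists>c. real (mult b c) * \<nu> c \<noteq> 0"
    proof (rule ccontr)
      assume "\<not> ?thesis"
      then have "(\<lambda>c. real (mult b c) * \<nu> c) = (\<lambda>_. 0)" by auto
      then have h0: "((\<lambda>c. real (mult b c) * \<nu> c) has_sum 0) UNIV" by simp
      show False using has_sum_unique[OF h0 cons[of b]] that by simp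
    qed
    then obtain c where c: "real (mult b c) * \<nu> c \<noteq> 0" by blast
    then have nc: "\<nu> c > 0" using nn[of c] by auto
    have "count_list c b \<noteq> 0" using c by (auto simp: mult_def)
    then have bc: "b \<in> set c" by (simp add: count_list_0_iff)
    have "prod_list (map qh c) > 0" using qparts[OF nc] by simp
    then have "qh b \<noteq> 0"
    proof (intro notI)
      assume "0 < prod_list (map qh c)" "qh b = 0"
      then have "0 \<in> set (map qh c)" using bc by force
      then have "prod_list (map qh c) = 0" by (simp add: prod_list_zero_iff)
      then show False using \<open>0 < prod_list (map qh c)\<close> by simp
    qed
    then show ?thesis using qh_nonneg[of b] by simp
  qed
  have lenhs: "((\<lambda>c. real (length c) * \<nu> c) has_sum z) UNIV"
  proof -
    have "((\<lambda>c. \<Sum>b\<in>UNIV. real (mult b c) * \<nu> c) has_sum (\<Sum>b\<in>UNIV. \<phi> b)) UNIV"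
      by (rule has_sum_sumI) (auto intro: cons)
    moreover have "(\<lambda>c. \<Sum>b\<in>UNIV. real (mult b c) * \<nu> c) = (\<lambda>c. real (length c) * \<nu> c)"
      by (rule ext) (simp add: length_count sum_distrib_right mult_def)
    ultimately show ?thesis by (simp add: z_def)
  qed
  have key: "t * z - ln (\<Sum>n. p n * exp (t * real n)) \<le> R - E"
    if sf: "summable (\<lambda>n. p n * exp (t * real n))" for t
  proof -
    define Zt where "Zt = (\<Sum>n. p n * exp (t * real n))"
    have Ztp: "Zt > 0" unfolding Zt_def by (rule Zpos[OF sf])
    define w where "w c = p (length c) * exp (t * real (length c)) * prod_list (map pv c)" for c :: "'a list"
    have wnn: "w c \<ge> 0" for c unfolding w_def using p_nonneg pi_nonneg
      by (intro mult_nonneg_nonneg prod_list_nonneg) auto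
    have wF: "sum w F \<le> Zt" if F: "finite F" for F
    proof -
      define N where "N = (\<Sum>c\<in>F. length c)"
      have sub: "F \<subseteq> {c. length c \<le> N}" unfolding N_def using F by (auto intro: member_le_sum)
      have "sum w F \<le> sum w {c. length c \<le> N}"
        using sub wnn by (intro sum_mono2 finite_len_le) auto
      also have "\<dots> = (\<Sum>n\<le>N. p n * exp (t * real n) * (\<Sum>b\<in>UNIV. pv b) ^ n)"
        unfolding sum_len_le w_def by (simp add: sum_distrib_left[symmetric] sum_prod_len)
      also have "\<dots> \<le> (\<Sum>n\<le>N. p n * exp (t * real n))"
      proof (intro sum_mono)
        fix n
        have "(\<Sum>b\<in>UNIV. pv b) ^ n \<le> 1" using pi_sum_le pi_nonneg by (intro power_le_one sum_nonneg) auto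
        then show "p n * exp (t * real n) * (\<Sum>b\<in>UNIV. pv b) ^ n \<le> p n * exp (t * real n)"
          using p_nonneg[of n] by (intro mult_left_le) auto
      qed
      also have "\<dots> \<le> Zt" unfolding Zt_def
        by (rule sum_le_suminf[OF sf]) (auto simp: p_nonneg)
      finally show ?thesis .
    qed
    have wsum: "w summable_on UNIV"
      by (rule nonneg_bdd_above_summable_on) (auto intro!: bdd_aboveI wnn wF)
    have sw: "(w has_sum (infsum w UNIV)) UNIV" by (rule has_sum_infsum[OF wsum])
    have WZ: "infsum w UNIV \<le> Zt" by (rule infsum_le_finite_sums[OF wsum wF]) auto
    have zpos_if: "z > 0" if "\<phi> x > 0" for x
      using that member_le_sum[of x UNIV \<phi>] phi_nonneg unfolding z_def by force
    have wpos: "w c > 0" if nc: "\<nu> c > 0" for c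
    proof -
      have "pv x > 0" if "x \<in> set c" for x
        using supp[OF nc that] zpos_if[OF supp[OF nc that]] by (simp add: pv_def)
      then have "prod_list (map pv c) > 0" by (intro prod_list_pos') auto
      then show ?thesis unfolding w_def using qparts[OF nc] by simp
    qed
    have ptw: "\<nu> c * ln (w c / ?q c) = t * (real (length c) * \<nu> c) + (\<Sum>b\<in>UNIV. hh b * (real (mult b c) * \<nu> c))" for c
    proof (cases "\<nu> c > 0")
      case True
      have pvx: "pv x > 0" if "x \<in> set c" for x
        using supp[OF True that] zpos_if[OF supp[OF True that]] by (simp add: pv_def)
      have qx: "qh x > 0" if "x \<in> set c" for x using ac[OF supp[OF True that]] .
      have pl: "p (length c) > 0" using qparts[OF True] by simp
      have "w c / ?q c = exp (t * real (length c)) * prod_list (map (\<lambda>x. pv x / qh x) c)"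
        unfolding w_def qword_def using pl by (simp add: prod_list_div[symmetric])
      moreover have pp: "prod_list (map (\<lambda>x. pv x / qh x) c) > 0" using pvx qx by (intro prod_list_pos') auto
      ultimately have "ln (w c / ?q c) = t * real (length c) + ln (prod_list (map (\<lambda>x. pv x / qh x) c))"
        by (simp add: ln_mult_pos)
      also have "ln (prod_list (map (\<lambda>x. pv x / qh x) c)) = sum_list (map (\<lambda>x. ln (pv x / qh x)) c)"
        using pvx qx by (intro ln_prod_list) auto
      also have "\<dots> = (\<Sum>b\<in>UNIV. real (count_list c b) * hh b)"
        by (simp add: sum_list_count hh_def)
      finally show ?thesis by (simp add: sum_distrib_left algebra_simps mult_def)
    next
      case False
      then have "\<nu> c = 0" using nn[of c] by simp
      then show ?thesis by simp
    qed
    have sG: "((\<lambda>c. \<nu> c * ln (w c / ?q c)) has_sum (t * z + E)) UNIV"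
    proof -
      have "((\<lambda>c. t * (real (length c) * \<nu> c) + (\<Sum>b\<in>UNIV. hh b * (real (mult b c) * \<nu> c))) has_sum
             (t * z + (\<Sum>b\<in>UNIV. hh b * \<phi> b))) UNIV"
        by (intro has_sum_add has_sum_cmult_right lenhs has_sum_sumI) (auto intro: has_sum_cmult_right cons)
      then show ?thesis by (simp add: ptw E_def mult.commute)
    qed
    have "t * z + E - ln Zt \<le> R"
      by (rule gibbs[OF nn s1 qpos wpos wnn sH sG sw WZ Ztp])
    then show ?thesis unfolding Zt_def by simp
  qed
  have "Ip p z \<le> ereal (R - E)" by (rule Ip_le) (rule key)
  then have "ereal E + Ip p z \<le> ereal E + ereal (R - E)" by (rule add_left_mono)
  then show ?thesis using first_term[OF ac] relR by simp
qed


lemma UB: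
  "Inf {relent \<nu> (qword p qh) | \<nu>. is_prob \<nu> \<and> (\<forall>b. ((\<lambda>c. real (mult b c) * \<nu> c) has_sum \<phi> b) UNIV)}
     \<le> (if z = 0 then 0 else ereal z * relent pv qh) + Ip p z"
  (is "Inf ?A \<le> ?R")
proof (cases "z = 0")
  case True
  then have phi0: "\<phi> b = 0" for b using z_def sum_nonneg_eq_0_iff[of UNIV \<phi>] phi_nonneg by simp
  define \<nu>0 where "\<nu>0 c = (if c = [] then (1::real) else 0)" for c :: "'a list"
  have "(\<nu>0 has_sum 1) UNIV"
    by (rule has_sum_finite_neutralI[of "{[]}"]) (auto simp: \<nu>0_def)
  moreover have "((\<lambda>c. real (mult b c) * \<nu>0 c) has_sum \<phi> b) UNIV" for b
  proof -
    have "(\<lambda>c. real (mult b c) * \<nu>0 c) = (\<lambda>_. 0)" by (rule ext) (simp add: \<nu>0_def mult_def)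
    then show ?thesis by (simp add: phi0)
  qed
  ultimately have mem: "relent \<nu>0 (qword p qh) \<in> ?A" unfolding is_prob_def by (auto simp: \<nu>0_def)
  have "?R = Ip p 0" using True by simp
  show ?thesis
  proof (cases "p 0 = 0")
    case True
    have "?R = \<infinity>" using \<open>?R = Ip p 0\<close> Ip0_zero[OF True] by simp
    then show ?thesis by (metis ereal_less_eq(1))
  next
    case False
    then have p0: "p 0 > 0" using p_nonneg[of 0] by simp
    have "((\<lambda>c. \<nu>0 c * ln (\<nu>0 c / qword p qh c)) has_sum (ln (1 / p 0))) UNIV"
      by (rule has_sum_finite_neutralI[of "{[]}"]) (auto simp: \<nu>0_def qword_def)
    then have "relent \<nu>0 (qword p qh) = ereal (ln (1 / p 0))"
      unfolding relent_def using p0 by (auto simp: has_sum_iff \<nu>0_def qword_def split: if_splits)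
    also have "\<dots> = ereal (- ln (p 0))" using p0 by (simp add: ln_div)
    also have "\<dots> \<le> Ip p 0" by (rule Ip0_pos[OF p0])
    finally show ?thesis using Inf_lower[OF mem] \<open>?R = Ip p 0\<close> by simp
  qed
next
  case False
  then have z: "z > 0" using z_nonneg by simp
  show ?thesis
  proof (cases "\<forall>b. \<phi> b > 0 \<longrightarrow> qh b > 0")
    case False
    then obtain b where b: "\<phi> b > 0" "\<not> qh b > 0" by blast
    then have "pv b > 0" using z by (simp add: pv_def)
    then have "relent pv qh = \<infinity>" unfolding relent_def using b by auto
    then have "?R = \<infinity>" using z Ip_nonneg[of z] by (cases "Ip p z") auto
    then show ?thesis by (metis ereal_less_eq(1))
  next
    case True
    then have ac: "\<And>b. \<phi> b > 0 \<Longrightarrow> qh b > 0" by blast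
    have R: "?R = ereal E + Ip p z" using first_term[OF ac] by simp
    show ?thesis
    proof (cases "Ip p z = \<infinity>")
      case True
      then have "?R = \<infinity>" using R by simp
      then show ?thesis by (metis ereal_less_eq(1))
    next
      case False
      then obtain S where S: "Ip p z = ereal S" using Ip_nonneg[of z] by (cases "Ip p z") auto
      have "Inf ?A \<le> ereal (E + S)"
      proof (rule ereal_le_epsilon2)
        fix e :: real assume e: "e > 0"
        obtain r K where g: "good p z (S + e) r K" using CR[OF z S e] by blast
        define \<nu> where "\<nu> = (\<lambda>c. r (length c) * prod_list (map pv c))"
        have "relent \<nu> (qword p qh) \<in> ?A"
          using NU(1,2)[OF z ac g] unfolding \<nu>_def by blast
        then have "Inf ?A \<le> relent \<nu> (qword p qh)" by (rule Inf_lower)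
        also have "\<dots> = ereal ((\<Sum>n\<le>K. r n * ln (r n / p n)) + E)" using NU(3)[OF z ac g] by (simp add: \<nu>_def)
        also have "\<dots> \<le> ereal (S + e + E)" using g unfolding good_def by simp
        finally show "Inf ?A \<le> ereal (E + S) + ereal e" by (simp add: algebra_simps)
      qed
      then show ?thesis using R S by simp
    qed
  qed
qed

end

theorem lemma4p1:
  fixes qh :: "'a::finite \<Rightarrow> real" and p :: "nat \<Rightarrow> real" and \<phi> :: "'a \<Rightarrow> real"
  assumes qh_nonneg: "\<forall>b. qh b \<ge> 0" and qh_sum: "(\<Sum>b\<in>UNIV. qh b) = 1"
    and p_nonneg: "\<forall>n. p n \<ge> 0" and p_sum: "p sums 1"
    and p_mean: "(\<lambda>n. real n * p n) sums 1"
    and phi_nonneg: "\<forall>b. \<phi> b \<ge> 0"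
  defines "z \<equiv> (\<Sum>b\<in>UNIV. \<phi> b)"
  shows "Inf {relent \<nu> (qword p qh) | \<nu>. is_prob \<nu> \<and>
               (\<forall>b. ((\<lambda>c. real (mult b c) * \<nu> c) has_sum \<phi> b) UNIV)}
         = (if z = 0 then 0 else ereal z * relent (\<lambda>b. \<phi> b / z) qh) + Ip p z"
proof -
  interpret main p qh \<phi> z
    by unfold_locales (use assms in auto)
  have eq: "(\<lambda>b. \<phi> b / z) = pv" by (simp add: pv_eq)
  show ?thesis unfolding eq
  proof (rule antisym)
    show "Inf {relent \<nu> (qword p qh) | \<nu>. is_prob \<nu> \<and> (\<forall>b. ((\<lambda>c. real (mult b c) * \<nu> c) has_sum \<phi> b) UNIV)}
      \<le> (if z = 0 then 0 else ereal z * relent pv qh) + Ip p z" by (rule UB)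
    show "(if z = 0 then 0 else ereal z * relent pv qh) + Ip p z
      \<le> Inf {relent \<nu> (qword p qh) | \<nu>. is_prob \<nu> \<and> (\<forall>b. ((\<lambda>c. real (mult b c) * \<nu> c) has_sum \<phi> b) UNIV)}"
    proof (rule Inf_greatest)
      fix x assume "x \<in> {relent \<nu> (qword p qh) | \<nu>. is_prob \<nu> \<and> (\<forall>b. ((\<lambda>c. real (mult b c) * \<nu> c) has_sum \<phi> b) UNIV)}"
      then obtain \<nu> where x: "x = relent \<nu> (qword p qh)" and pr: "is_prob \<nu>"
        and cs: "\<forall>b. ((\<lambda>c. real (mult b c) * \<nu> c) has_sum \<phi> b) UNIV" by blast
      show "(if z = 0 then 0 else ereal z * relent pv qh) + Ip p z \<le> x"
        unfolding x by (rule LB[OF pr]) (use cs in blast)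
    qed
  qed
qed

end
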